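(* Let $n\in\mathbb N$ and suppose $\vartheta_n\equiv1$. For $h\in\mathsf F(\mathcal X_n)$ let $\bar h(\bar x_n)=h(\bar x^2_n)$. Then $\bar\eta_n\bar h=\eta_nh$ and, for every $\ell\in\llbracket0,n\rrbracket$, $\bar\sigma^2_{\ell,n}(\bar h)=\sigma^2_{\ell,n}(h)$. More generally, for every $m\in\mathbb N^*$ and every $f\in\mathsf F(\mathcal X_m)$ with $\bar f(\bar x_m)=f(\bar x^2_m)$, one has $\bar\eta_m\bar f=\eta_m(\vartheta_mf)/\eta_m\vartheta_m$.
   Context: Notation: $\mathbb N=\{0,1,2,\dots\}$, $\mathbb N^*=\mathbb N\setminus\{0\}$; $\llbracket m,n\rrbracket=\{k\in\mathbb N: m\le k\le n\}$; for a measure $\mu$, a (possibly unnormalised) kernel $K$ and a bounded measurable $h$: $\mu h=\int h\,d\mu$, $Kh(x)=\int h(y)K(x,dy)$, $\mu K(A)=\int K(x,A)\mu(dx)$, $KL(x,A)=\int K(x,dy)L(y,A)$. $\mathsf F(\mathcal X)$ denotes the set of bounded measurable real functions on $(\mathsf X,\mathcal X)$. Model: $(\mathsf X_n,\mathcal X_n)_{n\in\mathbb N}$ are measurable spaces; for each $n$, $L_n:\mathsf X_n\times\mathcal X_{n+1}\to\mathbb R_+$ is a kernel with $\sup_{x}L_n\mathbf 1_{\mathsf X_{n+1}}(x)<\infty$; $L_{k:m}=L_kL_{k+1}\cdots L_m$ if $k\le m$ and $L_{k:m}=\mathrm{id}$ otherwise; $\chi$ is a finite measure on $\mathcal X_0$;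 $\eta_n=\chi L_{0:n-1}/(\chi L_{0:n-1}\mathbf 1_{\mathsf X_n})$ (normalising constants assumed positive and finite). Algorithmic ingredients: a probability measure $\nu$ on $\mathcal X_0$ with $\chi\ll\nu$ and $w_{-1}=d\chi/d\nu$; measurable positive functions $\vartheta_n$ on $\mathsf X_n$ (adjustment multipliers); Markov kernels $P_n$ from $\mathsf X_n$ to $\mathcal X_{n+1}$ and measurable $w_n:\mathsf X_n\times\mathsf X_{n+1}\to\mathbb R_+$ with $\int h(y)L_n(x,dy)=\int h(y)w_n(x,y)P_n(x,dy)$ for all $x\in\mathsf X_n$, $h\in\mathsf F(\mathcal X_{n+1})$. Assume all quantities below are finite (e.g. $\vartheta_m$, $w_m/\vartheta_m$, $w_{-1}$ bounded). Asymptotic variance: for $h\in\mathsf F(\mathcal X_n)$ and $\ell\in\llbracket0,n\rrbracket$, $$\sigma^2_{\ell,n}(h)=\mathbf 1_{\{\ell=0\}}\frac{\chi\big(w_{-1}\{L_{0:n-1}(h-\eta_nh)\}^2\big)}{(\chi L_{0:n-1}\mathbf 1_{\mathsf X_n})^2}+\sum_{m=(\ell-1)\vee0}^{n-1}\eta_m\vartheta_m\,\frac{\int\eta_m(dx)\,\vartheta_m(x)^{-1}\int L_m(x,dy)\,w_m(x,y)\{L_{m+1:n-1}(h-\eta_nh)(y)\}^2}{(\eta_mL_{m:n-1}\mathbf 1_{\mathsf X_n})^2}.$$ Auxiliary Feynman–Kac model: $\bar{\mathsf X}_0=\mathsf X_0$ and $\bar{\mathsf X}_n=\mathsf X_{n-1}\times\mathsf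 X_n$ for $n\ge1$, elements $\bar x_n=(\bar x^1_n,\bar x^2_n)$, with the convention $\bar x_0^2=\bar x_0$. Potentials $\bar g_0(x_0)=\vartheta_0(x_0)w_{-1}(x_0)$ and $\bar g_n(\bar x_n)=w_{n-1}(\bar x_n^1,\bar x_n^2)\vartheta_n(\bar x_n^2)/\vartheta_{n-1}(\bar x^1_n)$ for $n\ge1$; Markov kernels $\bar M_n(\bar x_n,d\bar x_{n+1})=\delta_{\bar x^2_n}(d\bar x^1_{n+1})\,P_n(\bar x^1_{n+1},d\bar x^2_{n+1})$. Set $\bar L_n(\bar x_n,d\bar x_{n+1})=\bar M_n(\bar x_n,d\bar x_{n+1})\bar g_{n+1}(\bar x_{n+1})$, $\bar L_{k:m}$ the corresponding products, $\bar\chi(d\bar x_0)=\bar g_0(\bar x_0)\nu(d\bar x_0)$ and $\bar\eta_m=\bar\chi\bar L_{0:m-1}/\bar\chi\bar L_{0:m-1}\mathbf 1$. Let $\bar\sigma^2_{\ell,n}$ denote the asymptotic variance formula above applied to this auxiliary model with initial measure $\bar\chi$, kernels $\bar L_m$, initial density $\bar g_0$ in place of $w_{-1}$, adjustment multipliers identically $1$, and $\bar g_{m+1}(\bar y)$ in place of $w_m(x,y)$, i.e. $$\bar\sigma^2_{\ell,n}(\bar h)=\mathbf 1_{\{\ell=0\}}\frac{\bar\chi(\bar g_0\{\bar L_{0:n-1}(\bar h-\bar\eta_n\bar h)\}^2)}{(\bar\chi\bar L_{0:n-1}\mathbf 1)^2}+\sum_{m=(\ell-1)\vee0}^{n-1}\frac{\bar\eta_m\bar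 L_m(\bar g_{m+1}\{\bar L_{m+1:n-1}(\bar h-\bar\eta_n\bar h)\}^2)}{(\bar\eta_m\bar L_{m:n-1}\mathbf 1)^2}.$$ *)

theory Defs
  imports "HOL-Probability.Probability"
begin

text \<open>Kernels are represented as functions from points to (unnormalised, finite) measures.
  Applying a kernel to a function: (K h)(x) = integral of h against K(x,-).\<close>

definition kapply :: "('b \<Rightarrow> 'b measure) \<Rightarrow> ('b \<Rightarrow> real) \<Rightarrow> 'b \<Rightarrow> real" where
  "kapply K h = (\<lambda>x. integral\<^sup>L (K x) h)"

fun Lprod :: "(nat \<Rightarrow> 'b \<Rightarrow> 'b measure) \<Rightarrow> nat \<Rightarrow> nat \<Rightarrow> ('b \<Rightarrow> real) \<Rightarrow> 'b \<Rightarrow> real" where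
  "Lprod L k 0 h = h"
| "Lprod L k (Suc j) h = kapply (L k) (Lprod L (Suc k) j h)"

text \<open>Lseg L k n h = L_{k:n-1} h, i.e. L_k ... L_{n-1} h, the identity if k \<ge> n.\<close>
definition Lseg :: "(nat \<Rightarrow> 'b \<Rightarrow> 'b measure) \<Rightarrow> nat \<Rightarrow> nat \<Rightarrow> ('b \<Rightarrow> real) \<Rightarrow> 'b \<Rightarrow> real" where
  "Lseg L k n h = Lprod L k (n - k) h"

definition fk_eta :: "'b measure \<Rightarrow> (nat \<Rightarrow> 'b \<Rightarrow> 'b measure) \<Rightarrow> nat \<Rightarrow> ('b \<Rightarrow> real) \<Rightarrow> real" where
  "fk_eta chi L n h = integral\<^sup>L chi (Lseg L 0 n h) / integral\<^sup>L chi (Lseg L 0 n (\<lambda>_. 1))"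

text \<open>Asymptotic variance sigma^2_{l,n}(h) with initial density w0 (= w_{-1}),
  adjustment multipliers theta and weights w.\<close>
definition asym_var :: "'b measure \<Rightarrow> (nat \<Rightarrow> 'b \<Rightarrow> 'b measure) \<Rightarrow> ('b \<Rightarrow> real) \<Rightarrow>
    (nat \<Rightarrow> 'b \<Rightarrow> real) \<Rightarrow> (nat \<Rightarrow> 'b \<Rightarrow> 'b \<Rightarrow> real) \<Rightarrow> nat \<Rightarrow> nat \<Rightarrow> ('b \<Rightarrow> real) \<Rightarrow> real" where
  "asym_var chi L w0 theta w l n h =
    (let hc = (\<lambda>x. h x - fk_eta chi L n h) in
      (if l = 0 then integral\<^sup>L chi (\<lambda>x. w0 x * (Lseg L 0 n hc x)\<^sup>2)
                      / (integral\<^sup>L chi (Lseg L 0 n (\<lambda>_. 1)))\<^sup>2 else 0)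
    + (\<Sum>m\<in>{l - 1..<n}.
         fk_eta chi L m (theta m)
         * fk_eta chi L m (\<lambda>x. inverse (theta m x)
               * integral\<^sup>L (L m x) (\<lambda>y. w m x y * (Lseg L (Suc m) n hc y)\<^sup>2))
         / (fk_eta chi L m (Lseg L m n (\<lambda>_. 1)))\<^sup>2))"

text \<open>Auxiliary model. Points of bar X_n are pairs (x^1, x^2); bar X_0 = X_0 is embedded
  diagonally via x \<mapsto> (x, x), so that the second component is x (convention bar x_0^2 = bar x_0).\<close>
definition gbar :: "('a \<Rightarrow> real) \<Rightarrow> (nat \<Rightarrow> 'a \<Rightarrow> real) \<Rightarrow> (nat \<Rightarrow> 'a \<Rightarrow> 'a \<Rightarrow> real)
    \<Rightarrow> nat \<Rightarrow> 'a \<times> 'a \<Rightarrow> real" where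
  "gbar wm1 theta w n z =
     (if n = 0 then theta 0 (snd z) * wm1 (snd z)
      else w (n - 1) (fst z) (snd z) * theta n (snd z) / theta (n - 1) (fst z))"

text \<open>bar L_n(bar x_n, d bar x_{n+1}) = delta_{bar x_n^2}(d bar x^1_{n+1}) P_n(bar x^1_{n+1}, d bar x^2_{n+1})
  bar g_{n+1}(bar x_{n+1}).\<close>
definition Lbar :: "(nat \<Rightarrow> 'a measure) \<Rightarrow> (nat \<Rightarrow> 'a \<Rightarrow> 'a measure) \<Rightarrow> (nat \<Rightarrow> 'a \<times> 'a \<Rightarrow> real)
    \<Rightarrow> nat \<Rightarrow> 'a \<times> 'a \<Rightarrow> ('a \<times> 'a) measure" where
  "Lbar M P g n z = density (distr (P n (snd z)) (M n \<Otimes>\<^sub>M M (Suc n)) (\<lambda>y. (snd z, y)))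
                            (\<lambda>z'. ennreal (g (Suc n) z'))"

definition chibar :: "(nat \<Rightarrow> 'a measure) \<Rightarrow> 'a measure \<Rightarrow> (nat \<Rightarrow> 'a \<times> 'a \<Rightarrow> real) \<Rightarrow> ('a \<times> 'a) measure" where
  "chibar M nu g = density (distr nu (M 0 \<Otimes>\<^sub>M M 0) (\<lambda>x. (x, x))) (\<lambda>z. ennreal (g 0 z))"

end

theory Submission imports Defs begin


lemma integral_kernel_measurable:
  fixes F :: "'a \<times> 'b \<Rightarrow> real"
  assumes K: "K \<in> A \<rightarrow>\<^sub>M subprob_algebra B" and F: "F \<in> borel_measurable (A \<Otimes>\<^sub>M B)"
  shows "(\<lambda>x. integral\<^sup>L (K x) (\<lambda>y. F (x,y))) \<in> borel_measurable A"
proof -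
  have 1: "(\<lambda>x. distr (K x) (A \<Otimes>\<^sub>M B) (Pair x)) \<in> A \<rightarrow>\<^sub>M subprob_algebra (A \<Otimes>\<^sub>M B)"
    by (rule measurable_distr2[OF _ K]) simp
  have 2: "(\<lambda>x. integral\<^sup>L (distr (K x) (A \<Otimes>\<^sub>M B) (Pair x)) F) \<in> borel_measurable A"
    by (rule measurable_compose[OF 1 integral_measurable_subprob_algebra[OF F]])
  show ?thesis
  proof (rule measurable_cong[THEN iffD1, OF _ 2])
    fix x assume x: "x \<in> space A"
    have s: "sets (K x) = sets B" using K x by (rule subprob_measurableD)
    have "Pair x \<in> K x \<rightarrow>\<^sub>M A \<Otimes>\<^sub>M B"
      using x by (simp add: measurable_cong_sets[OF s refl])
    then show "integral\<^sup>L (distr (K x) (A \<Otimes>\<^sub>M B) (Pair x)) F = integral\<^sup>L (K x) (\<lambda>y. F (x,y))"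
      using F by (simp add: integral_distr)
  qed
qed

lemma prob_integral_bound:
  fixes f :: "'a \<Rightarrow> real"
  assumes "prob_space Q" "f \<in> borel_measurable Q" "\<And>x. x \<in> space Q \<Longrightarrow> \<bar>f x\<bar> \<le> B"
  shows "\<bar>integral\<^sup>L Q f\<bar> \<le> B"
proof -
  interpret prob_space Q by fact
  have i: "integrable Q f"
    by (rule integrable_const_bound[where B=B]) (use assms in auto)
  have "\<bar>integral\<^sup>L Q f\<bar> \<le> integral\<^sup>L Q (\<lambda>x. \<bar>f x\<bar>)"
    by (rule integral_abs_bound)
  also have "\<dots> \<le> integral\<^sup>L Q (\<lambda>x. B)"
    by (rule integral_mono) (use i assms in auto)
  also have "\<dots> = B" by (simp add: prob_space)
  finally show ?thesis .
qed




locale fkset =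
  fixes M :: "nat \<Rightarrow> 'a measure"
    and L P :: "nat \<Rightarrow> 'a \<Rightarrow> 'a measure"
    and chi nu :: "'a measure"
    and wm1 :: "'a \<Rightarrow> real"
    and theta :: "nat \<Rightarrow> 'a \<Rightarrow> real"
    and w :: "nat \<Rightarrow> 'a \<Rightarrow> 'a \<Rightarrow> real"
  assumes L_sets: "\<And>k x. x \<in> space (M k) \<Longrightarrow> sets (L k x) = sets (M (Suc k))"
    and nu_prob: "prob_space nu"
    and nu_sets: "sets nu = sets (M 0)"
    and wm1_meas: "wm1 \<in> borel_measurable (M 0)"
    and wm1_nonneg: "\<And>x. x \<in> space (M 0) \<Longrightarrow> 0 \<le> wm1 x"
    and chi_dens: "chi = density nu (\<lambda>x. ennreal (wm1 x))"
    and norm_pos: "\<And>k. integral\<^sup>L chi (Lseg L 0 k (\<lambda>_. 1)) > 0"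
    and theta_meas: "\<And>k. theta k \<in> borel_measurable (M k)"
    and theta_pos: "\<And>k x. x \<in> space (M k) \<Longrightarrow> 0 < theta k x"
    and theta_bdd: "\<And>k. \<exists>B. \<forall>x\<in>space (M k). theta k x \<le> B"
    and P_kernel: "\<And>k. P k \<in> M k \<rightarrow>\<^sub>M prob_algebra (M (Suc k))"
    and w_meas: "\<And>k. (\<lambda>(x, y). w k x y) \<in> borel_measurable (M k \<Otimes>\<^sub>M M (Suc k))"
    and w_nonneg: "\<And>k x y. x \<in> space (M k) \<Longrightarrow> y \<in> space (M (Suc k)) \<Longrightarrow> 0 \<le> w k x y"
    and w_bdd: "\<And>k. \<exists>B. \<forall>x\<in>space (M k). \<forall>y\<in>space (M (Suc k)). w k x y / theta k x \<le> B"
    and L_wP: "\<And>k x g. x \<in> space (M k) \<Longrightarrow> g \<in> borel_measurable (M (Suc k)) \<Longrightarrow>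
                 (\<exists>B. \<forall>y\<in>space (M (Suc k)). \<bar>g y\<bar> \<le> B) \<Longrightarrow>
                 integral\<^sup>L (L k x) g = integral\<^sup>L (P k x) (\<lambda>y. g y * w k x y)"
begin

abbreviation "G \<equiv> gbar wm1 theta w"
abbreviation "LB \<equiv> Lbar M P G"
abbreviation "CB \<equiv> chibar M nu G"

lemma G_Suc: "G (Suc k) z = w k (fst z) (snd z) * theta (Suc k) (snd z) / theta k (fst z)"
  by (simp add: gbar_def)

lemma G0: "G 0 z = theta 0 (snd z) * wm1 (snd z)"
  by (simp add: gbar_def)

lemma P_sub: "P k \<in> M k \<rightarrow>\<^sub>M subprob_algebra (M (Suc k))"
  using P_kernel by (rule measurable_prob_algebraD)

lemma P_prob: "x \<in> space (M k) \<Longrightarrow> prob_space (P k x)"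
  using measurable_space[OF P_kernel] by (auto simp: space_prob_algebra)

lemma P_sets: "x \<in> space (M k) \<Longrightarrow> sets (P k x) = sets (M (Suc k))"
  using measurable_space[OF P_kernel] by (auto simp: space_prob_algebra)

lemma P_space: "x \<in> space (M k) \<Longrightarrow> space (P k x) = space (M (Suc k))"
  using P_sets by (rule sets_eq_imp_space_eq)

lemma L_space: "x \<in> space (M k) \<Longrightarrow> space (L k x) = space (M (Suc k))"
  using L_sets by (rule sets_eq_imp_space_eq)

lemma theta_bdd': "\<exists>B\<ge>0. \<forall>x\<in>space (M k). \<bar>theta k x\<bar> \<le> B"
proof -
  obtain B where B: "\<forall>x\<in>space (M k). theta k x \<le> B" using theta_bdd by blast
  show ?thesis
  proof (rule exI[of _ "max B 0"], safe)
    fix x assume x: "x \<in> space (M k)"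
    then show "\<bar>theta k x\<bar> \<le> max B 0" using B theta_pos[OF x] by auto
  qed simp
qed

lemma w_bdd': "\<exists>B\<ge>0. \<forall>x\<in>space (M k). \<forall>y\<in>space (M (Suc k)). \<bar>w k x y / theta k x\<bar> \<le> B"
proof -
  obtain B where B: "\<forall>x\<in>space (M k). \<forall>y\<in>space (M (Suc k)). w k x y / theta k x \<le> B" using w_bdd by blast
  show ?thesis
  proof (rule exI[of _ "max B 0"], safe)
    fix x y assume x: "x \<in> space (M k)" and y: "y \<in> space (M (Suc k))"
    have "0 \<le> w k x y / theta k x" using w_nonneg[OF x y] theta_pos[OF x] by simp
    then have "\<bar>w k x y / theta k x\<bar> = w k x y / theta k x" by (rule abs_of_nonneg)
    moreover have "w k x y / theta k x \<le> B" using B x y by blast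
    ultimately show "\<bar>w k x y / theta k x\<bar> \<le> max B 0" by linarith
  qed simp
qed

lemma G_bdd: "\<exists>B\<ge>0. \<forall>z\<in>space (M k \<Otimes>\<^sub>M M (Suc k)). \<bar>G (Suc k) z\<bar> \<le> B"
proof -
  obtain B1 where B1: "B1 \<ge> 0" "\<forall>x\<in>space (M k). \<forall>y\<in>space (M (Suc k)). \<bar>w k x y / theta k x\<bar> \<le> B1"
    using w_bdd' by blast
  obtain B2 where B2: "B2 \<ge> 0" "\<forall>x\<in>space (M (Suc k)). \<bar>theta (Suc k) x\<bar> \<le> B2"
    using theta_bdd' by blast
  show ?thesis
  proof (rule exI[of _ "B1 * B2"], safe)
    fix x y assume "(x, y) \<in> space (M k \<Otimes>\<^sub>M M (Suc k))"
    then have x: "x \<in> space (M k)" and y: "y \<in> space (M (Suc k))" by (auto simp: space_pair_measure)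
    have "\<bar>G (Suc k) (x, y)\<bar> = \<bar>w k x y / theta k x\<bar> * \<bar>theta (Suc k) y\<bar>"
      by (simp add: G_Suc abs_mult)
    also have "\<dots> \<le> B1 * B2"
      using B1 B2 x y by (intro mult_mono) auto
    finally show "\<bar>G (Suc k) (x, y)\<bar> \<le> B1 * B2" .
  qed (use B1 B2 in simp)
qed

lemma G_meas: "G (Suc k) \<in> borel_measurable (M k \<Otimes>\<^sub>M M (Suc k))"
proof -
  have [measurable]: "theta k \<in> borel_measurable (M k)" "theta (Suc k) \<in> borel_measurable (M (Suc k))"
    by (rule theta_meas)+
  have w: "(\<lambda>z. w k (fst z) (snd z)) \<in> borel_measurable (M k \<Otimes>\<^sub>M M (Suc k))"
    using w_meas[of k] by (simp add: case_prod_beta')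
  show ?thesis unfolding G_Suc[abs_def]
    using w by measurable
qed

lemma G_nonneg: "z \<in> space (M k \<Otimes>\<^sub>M M (Suc k)) \<Longrightarrow> 0 \<le> G (Suc k) z"
proof -
  assume "z \<in> space (M k \<Otimes>\<^sub>M M (Suc k))"
  then have x: "fst z \<in> space (M k)" and y: "snd z \<in> space (M (Suc k))" by (auto simp: space_pair_measure)
  show ?thesis unfolding G_Suc
    using w_nonneg[OF x y] theta_pos[OF x] theta_pos[OF y] by simp
qed

end



fun Qp :: "(nat \<Rightarrow> 'a \<Rightarrow> 'a measure) \<Rightarrow> (nat \<Rightarrow> 'a \<times> 'a \<Rightarrow> real) \<Rightarrow> nat \<Rightarrow> nat \<Rightarrow> ('a \<Rightarrow> real) \<Rightarrow> 'a \<Rightarrow> real" where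
  "Qp P g k 0 f = f"
| "Qp P g k (Suc j) f = (\<lambda>x. integral\<^sup>L (P k x) (\<lambda>y. g (Suc k) (x, y) * Qp P g (Suc k) j f y))"

context fkset begin

lemma G_sec_meas: "x \<in> space (M k) \<Longrightarrow> (\<lambda>y. G (Suc k) (x, y)) \<in> borel_measurable (M (Suc k))"
proof -
  assume x: "x \<in> space (M k)"
  have "Pair x \<in> M (Suc k) \<rightarrow>\<^sub>M M k \<Otimes>\<^sub>M M (Suc k)" using x by simp
  from measurable_compose[OF this G_meas] show ?thesis by (simp add: comp_def)
qed

lemma w_sec_meas: "x \<in> space (M k) \<Longrightarrow> (\<lambda>y. w k x y) \<in> borel_measurable (M (Suc k))"
proof -
  assume x: "x \<in> space (M k)"
  have "Pair x \<in> M (Suc k) \<rightarrow>\<^sub>M M k \<Otimes>\<^sub>M M (Suc k)" using x by simp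
  from measurable_compose[OF this w_meas] show ?thesis by (simp add: comp_def)
qed

lemma w_bdd2: "\<exists>B\<ge>0. \<forall>x\<in>space (M k). \<forall>y\<in>space (M (Suc k)). \<bar>w k x y\<bar> \<le> B"
proof -
  obtain B1 where B1: "B1 \<ge> 0" "\<forall>x\<in>space (M k). \<forall>y\<in>space (M (Suc k)). \<bar>w k x y / theta k x\<bar> \<le> B1"
    using w_bdd' by blast
  obtain B2 where B2: "B2 \<ge> 0" "\<forall>x\<in>space (M k). \<bar>theta k x\<bar> \<le> B2"
    using theta_bdd' by blast
  show ?thesis
  proof (rule exI[of _ "B1 * B2"], safe)
    fix x y assume x: "x \<in> space (M k)" and y: "y \<in> space (M (Suc k))"
    have "\<bar>w k x y\<bar> = \<bar>w k x y / theta k x\<bar> * \<bar>theta k x\<bar>"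
      using theta_pos[OF x] by (simp add: abs_mult[symmetric])
    also have "\<dots> \<le> B1 * B2"
      using B1 B2 x y by (intro mult_mono) auto
    finally show "\<bar>w k x y\<bar> \<le> B1 * B2" .
  qed (use B1 B2 in simp)
qed

lemma Qp_mb:
  assumes "f \<in> borel_measurable (M (k + j))" "\<exists>B. \<forall>x\<in>space (M (k + j)). \<bar>f x\<bar> \<le> B"
  shows "Qp P G k j f \<in> borel_measurable (M k) \<and> (\<exists>B. \<forall>x\<in>space (M k). \<bar>Qp P G k j f x\<bar> \<le> B)"
  using assms
proof (induction j arbitrary: k)
  case 0
  then show ?case by simp
next
  case (Suc j)
  from Suc.prems have "Qp P G (Suc k) j f \<in> borel_measurable (M (Suc k)) \<and> (\<exists>B. \<forall>x\<in>space (M (Suc k)). \<bar>Qp P G (Suc k) j f x\<bar> \<le> B)"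
    by (intro Suc.IH) auto
  then obtain B where Qm: "Qp P G (Suc k) j f \<in> borel_measurable (M (Suc k))"
    and QB: "\<forall>x\<in>space (M (Suc k)). \<bar>Qp P G (Suc k) j f x\<bar> \<le> B" by blast
  obtain B1 where B1: "B1 \<ge> 0" "\<forall>z\<in>space (M k \<Otimes>\<^sub>M M (Suc k)). \<bar>G (Suc k) z\<bar> \<le> B1"
    using G_bdd by blast
  have F: "(\<lambda>z. G (Suc k) z * Qp P G (Suc k) j f (snd z)) \<in> borel_measurable (M k \<Otimes>\<^sub>M M (Suc k))"
    using G_meas measurable_compose[OF measurable_snd Qm] by (intro borel_measurable_times) auto
  have m: "Qp P G k (Suc j) f \<in> borel_measurable (M k)"
    using integral_kernel_measurable[OF P_sub F] by simp
  have b: "\<forall>x\<in>space (M k). \<bar>Qp P G k (Suc j) f x\<bar> \<le> B1 * B"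
  proof
    fix x assume x: "x \<in> space (M k)"
    have s: "sets (P k x) = sets (M (Suc k))" using P_sets[OF x] .
    have "\<bar>integral\<^sup>L (P k x) (\<lambda>y. G (Suc k) (x, y) * Qp P G (Suc k) j f y)\<bar> \<le> B1 * B"
    proof (rule prob_integral_bound[OF P_prob[OF x]])
      show "(\<lambda>y. G (Suc k) (x, y) * Qp P G (Suc k) j f y) \<in> borel_measurable (P k x)"
        unfolding measurable_cong_sets[OF s refl]
        using G_sec_meas[OF x] Qm by (intro borel_measurable_times)
      fix y assume "y \<in> space (P k x)"
      then have y: "y \<in> space (M (Suc k))" using P_space[OF x] by simp
      have "\<bar>G (Suc k) (x, y) * Qp P G (Suc k) j f y\<bar> = \<bar>G (Suc k) (x, y)\<bar> * \<bar>Qp P G (Suc k) j f y\<bar>"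
        by (simp add: abs_mult)
      also have "\<dots> \<le> B1 * B"
        using B1 QB x y by (intro mult_mono) (auto simp: space_pair_measure)
      finally show "\<bar>G (Suc k) (x, y) * Qp P G (Suc k) j f y\<bar> \<le> B1 * B" .
    qed
    then show "\<bar>Qp P G k (Suc j) f x\<bar> \<le> B1 * B" by simp
  qed
  show ?case using m b by blast
qed

end



context fkset begin

lemma LB_space: "space (LB k z) = space (M k \<Otimes>\<^sub>M M (Suc k))"
  by (simp add: Lbar_def)

lemma LB_integral:
  assumes z: "snd z \<in> space (M k)" and F: "F \<in> borel_measurable (M k \<Otimes>\<^sub>M M (Suc k))"
  shows "integral\<^sup>L (LB k z) F = integral\<^sup>L (P k (snd z)) (\<lambda>y. G (Suc k) (snd z, y) * F (snd z, y))"
proof -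
  have s: "sets (P k (snd z)) = sets (M (Suc k))" using P_sets[OF z] .
  have T: "(\<lambda>y. (snd z, y)) \<in> P k (snd z) \<rightarrow>\<^sub>M M k \<Otimes>\<^sub>M M (Suc k)"
    unfolding measurable_cong_sets[OF s refl] using z by simp
  let ?D = "distr (P k (snd z)) (M k \<Otimes>\<^sub>M M (Suc k)) (\<lambda>y. (snd z, y))"
  have Fd: "F \<in> borel_measurable ?D" using F by simp
  have Gd: "G (Suc k) \<in> borel_measurable ?D" using G_meas by simp
  have Gn: "AE x in ?D. 0 \<le> G (Suc k) x"
    by (rule AE_I2) (simp add: G_nonneg)
  have "integral\<^sup>L (LB k z) F = integral\<^sup>L ?D (\<lambda>x. G (Suc k) x * F x)"
    unfolding Lbar_def using integral_density[OF Fd Gd Gn] by simp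
  also have "\<dots> = integral\<^sup>L (P k (snd z)) (\<lambda>y. G (Suc k) (snd z, y) * F (snd z, y))"
    using T G_meas F by (subst integral_distr) auto
  finally show ?thesis .
qed

lemma LBprod_cong:
  assumes "\<And>z. snd z \<in> space (M (k + j)) \<Longrightarrow> F z = F' z" "snd z \<in> space (M k)"
  shows "Lprod LB k j F z = Lprod LB k j F' z"
  using assms
proof (induction j arbitrary: k z)
  case 0 then show ?case by simp
next
  case (Suc j)
  show ?case unfolding Lprod.simps kapply_def
  proof (rule Bochner_Integration.integral_cong[OF refl])
    fix y assume "y \<in> space (LB k z)"
    then have "snd y \<in> space (M (Suc k))" by (auto simp: LB_space space_pair_measure)
    then show "Lprod LB (Suc k) j F y = Lprod LB (Suc k) j F' y"
      using Suc.prems by (intro Suc.IH) auto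
  qed
qed

lemma Lprod_cong:
  assumes "\<And>y. y \<in> space (M (k + j)) \<Longrightarrow> F y = F' y" "x \<in> space (M k)"
  shows "Lprod L k j F x = Lprod L k j F' x"
  using assms
proof (induction j arbitrary: k x)
  case 0 then show ?case by simp
next
  case (Suc j)
  show ?case unfolding Lprod.simps kapply_def
  proof (rule Bochner_Integration.integral_cong[OF refl])
    fix y assume "y \<in> space (L k x)"
    then have "y \<in> space (M (Suc k))" using L_space[OF Suc.prems(2)] by simp
    then show "Lprod L (Suc k) j F y = Lprod L (Suc k) j F' y"
      using Suc.prems by (intro Suc.IH) auto
  qed
qed

lemma LBprod_Qp:
  assumes "f \<in> borel_measurable (M (k + j))" "\<exists>B. \<forall>x\<in>space (M (k + j)). \<bar>f x\<bar> \<le> B"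
    "snd z \<in> space (M k)"
  shows "Lprod LB k j (\<lambda>z. f (snd z)) z = Qp P G k j f (snd z)"
  using assms
proof (induction j arbitrary: k z)
  case 0 then show ?case by simp
next
  case (Suc j)
  have Qm: "Qp P G (Suc k) j f \<in> borel_measurable (M (Suc k))"
    using Qp_mb[of f "Suc k" j] Suc.prems by auto
  have "Lprod LB k (Suc j) (\<lambda>z. f (snd z)) z = integral\<^sup>L (LB k z) (\<lambda>y. Qp P G (Suc k) j f (snd y))"
    unfolding Lprod.simps kapply_def
  proof (rule Bochner_Integration.integral_cong[OF refl])
    fix y assume "y \<in> space (LB k z)"
    then have "snd y \<in> space (M (Suc k))" by (auto simp: LB_space space_pair_measure)
    then show "Lprod LB (Suc k) j (\<lambda>z. f (snd z)) y = Qp P G (Suc k) j f (snd y)"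
      using Suc.prems by (intro Suc.IH) auto
  qed
  also have "\<dots> = Qp P G k (Suc j) f (snd z)"
    using LB_integral[OF Suc.prems(3) measurable_compose[OF measurable_snd Qm]] by (simp add: comp_def)
  finally show ?case .
qed

lemma Lprod_Qp:
  assumes "f \<in> borel_measurable (M (k + j))" "\<exists>B. \<forall>x\<in>space (M (k + j)). \<bar>f x\<bar> \<le> B"
    "x \<in> space (M k)"
  shows "Lprod L k j (\<lambda>y. theta (k + j) y * f y) x = theta k x * Qp P G k j f x"
  using assms
proof (induction j arbitrary: k x)
  case 0 then show ?case by simp
next
  case (Suc j)
  have x: "x \<in> space (M k)" by fact
  obtain Qm: "Qp P G (Suc k) j f \<in> borel_measurable (M (Suc k))" and
    QB: "\<exists>B. \<forall>x\<in>space (M (Suc k)). \<bar>Qp P G (Suc k) j f x\<bar> \<le> B"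
    using Qp_mb[of f "Suc k" j] Suc.prems by auto
  obtain B where B: "\<forall>x\<in>space (M (Suc k)). \<bar>Qp P G (Suc k) j f x\<bar> \<le> B" using QB by blast
  obtain B2 where B2: "B2 \<ge> 0" "\<forall>x\<in>space (M (Suc k)). \<bar>theta (Suc k) x\<bar> \<le> B2"
    using theta_bdd' by blast
  let ?g = "\<lambda>y. theta (Suc k) y * Qp P G (Suc k) j f y"
  have gm: "?g \<in> borel_measurable (M (Suc k))" using theta_meas Qm by (intro borel_measurable_times)
  have gb: "\<exists>B. \<forall>y\<in>space (M (Suc k)). \<bar>?g y\<bar> \<le> B"
  proof (intro exI ballI)
    fix y assume y: "y \<in> space (M (Suc k))"
    have "\<bar>?g y\<bar> = \<bar>theta (Suc k) y\<bar> * \<bar>Qp P G (Suc k) j f y\<bar>" by (simp add: abs_mult)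
    also have "\<dots> \<le> B2 * B" using B B2 y by (intro mult_mono) auto
    finally show "\<bar>?g y\<bar> \<le> B2 * B" .
  qed
  have "Lprod L k (Suc j) (\<lambda>y. theta (k + Suc j) y * f y) x = integral\<^sup>L (L k x) ?g"
    unfolding Lprod.simps kapply_def
  proof (rule Bochner_Integration.integral_cong[OF refl])
    fix y assume "y \<in> space (L k x)"
    then have "y \<in> space (M (Suc k))" using L_space[OF x] by simp
    then show "Lprod L (Suc k) j (\<lambda>y. theta (k + Suc j) y * f y) y = ?g y"
      using Suc.prems Suc.IH[of "Suc k" y] by auto
  qed
  also have "\<dots> = integral\<^sup>L (P k x) (\<lambda>y. ?g y * w k x y)"
    using L_wP[OF x gm gb] .
  also have "\<dots> = theta k x * integral\<^sup>L (P k x) (\<lambda>y. G (Suc k) (x, y) * Qp P G (Suc k) j f y)"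
  proof -
    have "integral\<^sup>L (P k x) (\<lambda>y. ?g y * w k x y) = integral\<^sup>L (P k x) (\<lambda>y. theta k x * (G (Suc k) (x, y) * Qp P G (Suc k) j f y))"
      using theta_pos[OF x] by (intro Bochner_Integration.integral_cong) (auto simp: G_Suc field_simps)
    then show ?thesis by simp
  qed
  finally show ?case by simp
qed

lemma Lprod_mb:
  assumes "f \<in> borel_measurable (M (k + j))" "\<exists>B. \<forall>x\<in>space (M (k + j)). \<bar>f x\<bar> \<le> B"
  shows "Lprod L k j (\<lambda>y. theta (k + j) y * f y) \<in> borel_measurable (M k)"
proof -
  have "(\<lambda>x. theta k x * Qp P G k j f x) \<in> borel_measurable (M k)"
    using theta_meas Qp_mb[OF assms] by (intro borel_measurable_times) auto
  then show ?thesis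
    by (rule measurable_cong[THEN iffD1, rotated]) (use Lprod_Qp[OF assms] in simp)
qed

end



context fkset begin

lemma chi_space: "space chi = space (M 0)"
proof -
  have "space chi = space nu" unfolding chi_dens by simp
  also have "\<dots> = space (M 0)" using nu_sets by (rule sets_eq_imp_space_eq)
  finally show ?thesis .
qed

lemma nu_space: "space nu = space (M 0)"
  using nu_sets by (rule sets_eq_imp_space_eq)

lemma CB_space: "space CB = space (M 0 \<Otimes>\<^sub>M M 0)"
  by (simp add: chibar_def)

lemma chi_integral:
  assumes "\<Psi> \<in> borel_measurable (M 0)"
  shows "integral\<^sup>L chi \<Psi> = integral\<^sup>L nu (\<lambda>x. wm1 x * \<Psi> x)"
proof -
  have m: "\<Psi> \<in> borel_measurable nu" using assms unfolding measurable_cong_sets[OF nu_sets refl] .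
  have wm: "wm1 \<in> borel_measurable nu" using wm1_meas unfolding measurable_cong_sets[OF nu_sets refl] .
  have "AE x in nu. 0 \<le> wm1 x"
    by (rule AE_I2) (simp add: nu_space wm1_nonneg)
  then show ?thesis unfolding chi_dens using integral_density[OF m wm] by (simp only: real_scaleR_def)
qed

lemma CB_integral:
  assumes "\<Phi> \<in> borel_measurable (M 0)"
  shows "integral\<^sup>L CB (\<lambda>z. \<Phi> (snd z)) = integral\<^sup>L nu (\<lambda>x. theta 0 x * wm1 x * \<Phi> x)"
proof -
  let ?D = "distr nu (M 0 \<Otimes>\<^sub>M M 0) (\<lambda>x. (x, x))"
  have T: "(\<lambda>x. (x, x)) \<in> nu \<rightarrow>\<^sub>M M 0 \<Otimes>\<^sub>M M 0"
    unfolding measurable_cong_sets[OF nu_sets refl] by simp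
  have [measurable]: "theta 0 \<in> borel_measurable (M 0)" "wm1 \<in> borel_measurable (M 0)"
    "\<Phi> \<in> borel_measurable (M 0)" using theta_meas wm1_meas assms by auto
  have Fd: "(\<lambda>z. \<Phi> (snd z)) \<in> borel_measurable ?D" by simp
  have Gd: "G 0 \<in> borel_measurable ?D" unfolding G0[abs_def] by simp
  have Gn: "AE x in ?D. 0 \<le> G 0 x"
  proof (rule AE_I2)
    fix z assume "z \<in> space ?D"
    then have "snd z \<in> space (M 0)" by (auto simp: space_pair_measure)
    then show "0 \<le> G 0 z" unfolding G0 using theta_pos[of "snd z" 0] wm1_nonneg[of "snd z"] by simp
  qed
  have "integral\<^sup>L CB (\<lambda>z. \<Phi> (snd z)) = integral\<^sup>L ?D (\<lambda>z. G 0 z * \<Phi> (snd z))"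
    unfolding chibar_def using integral_density[OF Fd Gd Gn] by (simp only: real_scaleR_def)
  also have "\<dots> = integral\<^sup>L nu (\<lambda>x. G 0 (x, x) * \<Phi> (snd (x, x)))"
  proof (rule integral_distr[OF T])
    show "(\<lambda>z. G 0 z * \<Phi> (snd z)) \<in> borel_measurable (M 0 \<Otimes>\<^sub>M M 0)"
      unfolding G0 by measurable
  qed
  also have "\<dots> = integral\<^sup>L nu (\<lambda>x. theta 0 x * wm1 x * \<Phi> x)"
    unfolding G0 by simp
  finally show ?thesis .
qed

lemma Nbar:
  assumes f: "f \<in> borel_measurable (M m)" "\<exists>B. \<forall>x\<in>space (M m). \<bar>f x\<bar> \<le> B"
  shows "integral\<^sup>L CB (Lseg LB 0 m (\<lambda>z. f (snd z))) = integral\<^sup>L chi (Lseg L 0 m (\<lambda>y. theta m y * f y))"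
proof -
  have f': "f \<in> borel_measurable (M (0 + m))" "\<exists>B. \<forall>x\<in>space (M (0 + m)). \<bar>f x\<bar> \<le> B" using f by auto
  have Qm: "Qp P G 0 m f \<in> borel_measurable (M 0)" using Qp_mb[OF f'] by blast
  have Lm: "Lprod L 0 m (\<lambda>y. theta m y * f y) \<in> borel_measurable (M 0)" using Lprod_mb[OF f'] by simp
  have "integral\<^sup>L CB (Lseg LB 0 m (\<lambda>z. f (snd z))) = integral\<^sup>L CB (\<lambda>z. Qp P G 0 m f (snd z))"
    unfolding Lseg_def
    by (rule Bochner_Integration.integral_cong[OF refl])
       (use LBprod_Qp[OF f'] in \<open>auto simp: CB_space space_pair_measure\<close>)
  also have "\<dots> = integral\<^sup>L nu (\<lambda>x. theta 0 x * wm1 x * Qp P G 0 m f x)"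
    by (rule CB_integral[OF Qm])
  also have "\<dots> = integral\<^sup>L nu (\<lambda>x. wm1 x * Lprod L 0 m (\<lambda>y. theta m y * f y) x)"
    by (rule Bochner_Integration.integral_cong[OF refl])
       (use Lprod_Qp[OF f'] nu_space in auto)
  also have "\<dots> = integral\<^sup>L chi (Lseg L 0 m (\<lambda>y. theta m y * f y))"
    unfolding Lseg_def using chi_integral[OF Lm] by simp
  finally show ?thesis .
qed

lemma fk_cong:
  assumes "\<And>y. y \<in> space (M m) \<Longrightarrow> F y = F' y"
  shows "fk_eta chi L m F = fk_eta chi L m F'"
proof -
  have "integral\<^sup>L chi (Lseg L 0 m F) = integral\<^sup>L chi (Lseg L 0 m F')"
    unfolding Lseg_def
    by (rule Bochner_Integration.integral_cong[OF refl]) (use Lprod_cong[of 0 m F F'] assms chi_space in auto)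
  then show ?thesis by (simp add: fk_eta_def)
qed

lemma fkbar_cong:
  assumes "\<And>z. snd z \<in> space (M m) \<Longrightarrow> F z = F' z"
  shows "fk_eta CB LB m F = fk_eta CB LB m F'"
proof -
  have "integral\<^sup>L CB (Lseg LB 0 m F) = integral\<^sup>L CB (Lseg LB 0 m F')"
    unfolding Lseg_def
    by (rule Bochner_Integration.integral_cong[OF refl])
       (use LBprod_cong[of 0 m F F'] assms in \<open>auto simp: CB_space space_pair_measure\<close>)
  then show ?thesis by (simp add: fk_eta_def)
qed

lemma eta_bar:
  assumes f: "f \<in> borel_measurable (M m)" "\<exists>B. \<forall>x\<in>space (M m). \<bar>f x\<bar> \<le> B"
  shows "fk_eta CB LB m (\<lambda>z. f (snd z)) = fk_eta chi L m (\<lambda>x. theta m x * f x) / fk_eta chi L m (theta m)"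
proof -
  have one: "(\<lambda>_::'a. 1::real) \<in> borel_measurable (M m)" "\<exists>B. \<forall>x\<in>space (M m). \<bar>(\<lambda>_::'a. 1::real) x\<bar> \<le> B"
    by auto
  have N1: "integral\<^sup>L CB (Lseg LB 0 m (\<lambda>_. 1)) = integral\<^sup>L chi (Lseg L 0 m (theta m))"
    using Nbar[OF one] by simp
  have Nf: "integral\<^sup>L CB (Lseg LB 0 m (\<lambda>z. f (snd z))) = integral\<^sup>L chi (Lseg L 0 m (\<lambda>y. theta m y * f y))"
    using Nbar[OF f] .
  have pos: "integral\<^sup>L chi (Lseg L 0 m (\<lambda>_. 1)) \<noteq> 0" using norm_pos[of m] by simp
  show ?thesis unfolding fk_eta_def N1 Nf using pos by (simp add: field_simps)
qed

end



context fkset begin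

lemma Lseg_theta1:
  assumes th: "\<And>x. x \<in> space (M n) \<Longrightarrow> theta n x = 1" and k: "k \<le> n" and x: "x \<in> space (M k)"
  shows "Lseg L k n g x = Lprod L k (n - k) (\<lambda>y. theta (k + (n - k)) y * g y) x"
  unfolding Lseg_def by (rule Lprod_cong) (use th k x in auto)

lemma sum_term:
  assumes th: "\<And>x. x \<in> space (M n) \<Longrightarrow> theta n x = 1" and mn: "m < n"
    and g: "g \<in> borel_measurable (M n)" "\<exists>B. \<forall>x\<in>space (M n). \<bar>g x\<bar> \<le> B"
  shows "fk_eta CB LB m (\<lambda>_. 1) *
         fk_eta CB LB m (\<lambda>x. inverse 1 * integral\<^sup>L (LB m x) (\<lambda>y. G (Suc m) y * (Lseg LB (Suc m) n (\<lambda>z. g (snd z)) y)\<^sup>2))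
         / (fk_eta CB LB m (Lseg LB m n (\<lambda>_. 1)))\<^sup>2
       = fk_eta chi L m (theta m) *
         fk_eta chi L m (\<lambda>x. inverse (theta m x) * integral\<^sup>L (L m x) (\<lambda>y. w m x y * (Lseg L (Suc m) n g y)\<^sup>2))
         / (fk_eta chi L m (Lseg L m n (\<lambda>_. 1)))\<^sup>2"
proof -
  define j where "j = n - Suc m"
  have nj: "Suc m + j = n" using mn by (simp add: j_def)
  have g': "g \<in> borel_measurable (M (Suc m + j))" "\<exists>B. \<forall>x\<in>space (M (Suc m + j)). \<bar>g x\<bar> \<le> B"
    using g nj by auto
  define Q where "Q = Qp P G (Suc m) j g"
  obtain Qm: "Q \<in> borel_measurable (M (Suc m))" and QB0: "\<exists>B. \<forall>x\<in>space (M (Suc m)). \<bar>Q x\<bar> \<le> B"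
    using Qp_mb[OF g'] unfolding Q_def by blast
  obtain BQ where BQ: "\<forall>x\<in>space (M (Suc m)). \<bar>Q x\<bar> \<le> BQ" using QB0 by blast
  obtain B1 where B1: "B1 \<ge> 0" "\<forall>z\<in>space (M m \<Otimes>\<^sub>M M (Suc m)). \<bar>G (Suc m) z\<bar> \<le> B1"
    using G_bdd by blast
  define R where "R = (\<lambda>u. integral\<^sup>L (P m u) (\<lambda>y. G (Suc m) (u, y) * (G (Suc m) (u, y) * (Q y)\<^sup>2)))"
  have FR: "(\<lambda>z. G (Suc m) z * (G (Suc m) z * (Q (snd z))\<^sup>2)) \<in> borel_measurable (M m \<Otimes>\<^sub>M M (Suc m))"
    using G_meas measurable_compose[OF measurable_snd Qm] by measurable
  have Rm: "R \<in> borel_measurable (M m)"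
    unfolding R_def using integral_kernel_measurable[OF P_sub FR] by simp
  have Rb: "\<exists>B. \<forall>x\<in>space (M m). \<bar>R x\<bar> \<le> B"
  proof (intro exI ballI)
    fix u assume u: "u \<in> space (M m)"
    have s: "sets (P m u) = sets (M (Suc m))" using P_sets[OF u] .
    show "\<bar>R u\<bar> \<le> B1 * (B1 * BQ\<^sup>2)" unfolding R_def
    proof (rule prob_integral_bound[OF P_prob[OF u]])
      show "(\<lambda>y. G (Suc m) (u, y) * (G (Suc m) (u, y) * (Q y)\<^sup>2)) \<in> borel_measurable (P m u)"
        unfolding measurable_cong_sets[OF s refl]
        using G_sec_meas[OF u] Qm by measurable
      fix y assume "y \<in> space (P m u)"
      then have y: "y \<in> space (M (Suc m))" using P_space[OF u] by simp
      have Gy: "\<bar>G (Suc m) (u, y)\<bar> \<le> B1" using B1 u y by (auto simp: space_pair_measure)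
      have "(Q y)\<^sup>2 \<le> BQ\<^sup>2" using BQ y by (metis abs_le_square_iff abs_of_nonneg abs_ge_zero order_trans power2_abs)
      then have "\<bar>(Q y)\<^sup>2\<bar> \<le> BQ\<^sup>2" by simp
      then show "\<bar>G (Suc m) (u, y) * (G (Suc m) (u, y) * (Q y)\<^sup>2)\<bar> \<le> B1 * (B1 * BQ\<^sup>2)"
        unfolding abs_mult using Gy B1 by (intro mult_mono) auto
    qed
  qed
  have Qsnd: "Lseg LB (Suc m) n (\<lambda>z. g (snd z)) y = Q (snd y)" if "snd y \<in> space (M (Suc m))" for y
    unfolding Lseg_def Q_def using LBprod_Qp[OF g' that] by (simp add: j_def)
  have inner: "inverse 1 * integral\<^sup>L (LB m z) (\<lambda>y. G (Suc m) y * (Lseg LB (Suc m) n (\<lambda>z. g (snd z)) y)\<^sup>2)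
      = R (snd z)" if z: "snd z \<in> space (M m)" for z
  proof -
    have "integral\<^sup>L (LB m z) (\<lambda>y. G (Suc m) y * (Lseg LB (Suc m) n (\<lambda>z. g (snd z)) y)\<^sup>2)
        = integral\<^sup>L (LB m z) (\<lambda>y. G (Suc m) y * (Q (snd y))\<^sup>2)"
      by (rule Bochner_Integration.integral_cong[OF refl])
         (auto simp: LB_space space_pair_measure Qsnd)
    also have "\<dots> = R (snd z)"
    proof -
      have FM: "(\<lambda>y. G (Suc m) y * (Q (snd y))\<^sup>2) \<in> borel_measurable (M m \<Otimes>\<^sub>M M (Suc m))"
        using G_meas measurable_compose[OF measurable_snd Qm] by measurable
      show ?thesis unfolding R_def using LB_integral[OF z FM] by simp
    qed
    finally show ?thesis by simp
  qed
  have inner2: "theta m u * R u = inverse (theta m u) * integral\<^sup>L (L m u) (\<lambda>y. w m u y * (Lseg L (Suc m) n g y)\<^sup>2)"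
    if u: "u \<in> space (M m)" for u
  proof -
    obtain Bw where Bw: "Bw \<ge> 0" "\<forall>x\<in>space (M m). \<forall>y\<in>space (M (Suc m)). \<bar>w m x y\<bar> \<le> Bw"
      using w_bdd2 by blast
    obtain Bt where Bt: "Bt \<ge> 0" "\<forall>x\<in>space (M (Suc m)). \<bar>theta (Suc m) x\<bar> \<le> Bt"
      using theta_bdd' by blast
    let ?f = "\<lambda>y. w m u y * (theta (Suc m) y * Q y)\<^sup>2"
    have "integral\<^sup>L (L m u) (\<lambda>y. w m u y * (Lseg L (Suc m) n g y)\<^sup>2) = integral\<^sup>L (L m u) ?f"
    proof (rule Bochner_Integration.integral_cong[OF refl])
      fix y assume "y \<in> space (L m u)"
      then have y: "y \<in> space (M (Suc m))" using L_space[OF u] by simp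
      have "Lseg L (Suc m) n g y = Lprod L (Suc m) j (\<lambda>y. theta (Suc m + j) y * g y) y"
        using Lseg_theta1[OF th _ y] mn by (simp add: j_def)
      also have "\<dots> = theta (Suc m) y * Q y" unfolding Q_def by (rule Lprod_Qp[OF g' y])
      finally show "w m u y * (Lseg L (Suc m) n g y)\<^sup>2 = ?f y" by simp
    qed
    also have "\<dots> = integral\<^sup>L (P m u) (\<lambda>y. ?f y * w m u y)"
    proof (rule L_wP[OF u])
      show "?f \<in> borel_measurable (M (Suc m))"
        using w_sec_meas[OF u] theta_meas[of "Suc m"] Qm by measurable
      show "\<exists>B. \<forall>y\<in>space (M (Suc m)). \<bar>?f y\<bar> \<le> B"
      proof (intro exI ballI)
        fix y assume y: "y \<in> space (M (Suc m))"
        have "\<bar>theta (Suc m) y * Q y\<bar> \<le> Bt * BQ"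
          unfolding abs_mult using Bt BQ y by (intro mult_mono) auto
        then have "(theta (Suc m) y * Q y)\<^sup>2 \<le> (Bt * BQ)\<^sup>2"
          by (metis abs_ge_zero abs_le_square_iff order_trans abs_of_nonneg power2_abs)
        then have "\<bar>(theta (Suc m) y * Q y)\<^sup>2\<bar> \<le> (Bt * BQ)\<^sup>2" by simp
        then show "\<bar>?f y\<bar> \<le> Bw * (Bt * BQ)\<^sup>2"
          unfolding abs_mult using Bw u y by (intro mult_mono) auto
      qed
    qed
    finally have eq1: "integral\<^sup>L (L m u) (\<lambda>y. w m u y * (Lseg L (Suc m) n g y)\<^sup>2) = integral\<^sup>L (P m u) (\<lambda>y. ?f y * w m u y)" .
    have "R u = integral\<^sup>L (P m u) (\<lambda>y. (inverse (theta m u))\<^sup>2 * (?f y * w m u y))"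
      unfolding R_def using theta_pos[OF u]
      by (intro Bochner_Integration.integral_cong) (auto simp: G_Suc field_simps power2_eq_square)
    also have "\<dots> = (inverse (theta m u))\<^sup>2 * integral\<^sup>L (P m u) (\<lambda>y. ?f y * w m u y)" by simp
    finally show ?thesis unfolding eq1 using theta_pos[OF u] by (simp add: power2_eq_square field_simps)
  qed
  define t where "t = fk_eta chi L m (theta m)"
  define a where "a = fk_eta chi L m (\<lambda>x. inverse (theta m x) * integral\<^sup>L (L m x) (\<lambda>y. w m x y * (Lseg L (Suc m) n g y)\<^sup>2))"
  define d where "d = fk_eta chi L m (Lseg L m n (\<lambda>_. 1))"
  have e1: "fk_eta CB LB m (\<lambda>_. 1) = t / t"
  proof -
    have "fk_eta CB LB m (\<lambda>z. (\<lambda>_. 1) (snd z)) = fk_eta chi L m (\<lambda>x. theta m x * 1) / fk_eta chi L m (theta m)"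
      by (rule eta_bar) auto
    then show ?thesis by (simp add: t_def)
  qed
  have e2: "fk_eta CB LB m (\<lambda>x. inverse 1 * integral\<^sup>L (LB m x) (\<lambda>y. G (Suc m) y * (Lseg LB (Suc m) n (\<lambda>z. g (snd z)) y)\<^sup>2)) = a / t"
  proof -
    have "fk_eta CB LB m (\<lambda>x. inverse 1 * integral\<^sup>L (LB m x) (\<lambda>y. G (Suc m) y * (Lseg LB (Suc m) n (\<lambda>z. g (snd z)) y)\<^sup>2))
        = fk_eta CB LB m (\<lambda>z. R (snd z))"
      by (rule fkbar_cong) (rule inner)
    also have "\<dots> = fk_eta chi L m (\<lambda>x. theta m x * R x) / t"
      unfolding t_def by (rule eta_bar[OF Rm Rb])
    also have "fk_eta chi L m (\<lambda>x. theta m x * R x) = a"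
      unfolding a_def by (rule fk_cong) (rule inner2)
    finally show ?thesis .
  qed
  have e3: "fk_eta CB LB m (Lseg LB m n (\<lambda>_. 1)) = d / t"
  proof -
    define k where "k = n - m"
    have mk: "m + k = n" using mn by (simp add: k_def)
    have one: "(\<lambda>_::'a. 1::real) \<in> borel_measurable (M (m + k))" "\<exists>B. \<forall>x\<in>space (M (m + k)). \<bar>(\<lambda>_::'a. 1::real) x\<bar> \<le> B"
      by auto
    have "fk_eta CB LB m (Lseg LB m n (\<lambda>_. 1)) = fk_eta CB LB m (\<lambda>z. Qp P G m k (\<lambda>_. 1) (snd z))"
      by (rule fkbar_cong) (use LBprod_Qp[OF one] in \<open>simp add: Lseg_def k_def\<close>)
    also have "\<dots> = fk_eta chi L m (\<lambda>x. theta m x * Qp P G m k (\<lambda>_. 1) x) / t"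
      unfolding t_def by (rule eta_bar) (use Qp_mb[OF one] in auto)
    also have "fk_eta chi L m (\<lambda>x. theta m x * Qp P G m k (\<lambda>_. 1) x) = d"
      unfolding d_def
    proof (rule fk_cong)
      fix x assume x: "x \<in> space (M m)"
      have "Lseg L m n (\<lambda>_. 1) x = Lprod L m k (\<lambda>y. theta (m + k) y * 1) x"
        using Lseg_theta1[OF th _ x] mn by (simp add: k_def)
      also have "\<dots> = theta m x * Qp P G m k (\<lambda>_. 1) x" by (rule Lprod_Qp[OF one x])
      finally show "theta m x * Qp P G m k (\<lambda>_. 1) x = Lseg L m n (\<lambda>_. 1) x" by simp
    qed
    finally show ?thesis .
  qed
  show ?thesis
    unfolding e1 e2 e3 a_def[symmetric] t_def[symmetric] d_def[symmetric]
    by (cases "t = 0"; cases "d = 0") (simp_all add: field_simps power2_eq_square)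
qed

end



context fkset begin

lemma term0:
  assumes th: "\<And>x. x \<in> space (M n) \<Longrightarrow> theta n x = 1"
    and g: "g \<in> borel_measurable (M n)" "\<exists>B. \<forall>x\<in>space (M n). \<bar>g x\<bar> \<le> B"
  shows "integral\<^sup>L CB (\<lambda>x. G 0 x * (Lseg LB 0 n (\<lambda>z. g (snd z)) x)\<^sup>2) / (integral\<^sup>L CB (Lseg LB 0 n (\<lambda>_. 1)))\<^sup>2
       = integral\<^sup>L chi (\<lambda>x. wm1 x * (Lseg L 0 n g x)\<^sup>2) / (integral\<^sup>L chi (Lseg L 0 n (\<lambda>_. 1)))\<^sup>2"
proof -
  have g': "g \<in> borel_measurable (M (0 + n))" "\<exists>B. \<forall>x\<in>space (M (0 + n)). \<bar>g x\<bar> \<le> B" using g by auto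
  define Q where "Q = Qp P G 0 n g"
  have Qm: "Q \<in> borel_measurable (M 0)" using Qp_mb[OF g'] unfolding Q_def by blast
  have LQ: "Lseg L 0 n g x = theta 0 x * Q x" if x: "x \<in> space (M 0)" for x
  proof -
    have "Lseg L 0 n g x = Lprod L 0 (n - 0) (\<lambda>y. theta (0 + (n - 0)) y * g y) x"
      by (rule Lseg_theta1[OF th le0 x])
    also have "\<dots> = Lprod L 0 n (\<lambda>y. theta (0 + n) y * g y) x" by simp
    also have "\<dots> = theta 0 x * Q x" unfolding Q_def by (rule Lprod_Qp[OF g' x])
    finally show ?thesis .
  qed
  have den: "integral\<^sup>L CB (Lseg LB 0 n (\<lambda>_. 1)) = integral\<^sup>L chi (Lseg L 0 n (\<lambda>_. 1))"
  proof -
    have "integral\<^sup>L CB (Lseg LB 0 n (\<lambda>z. (\<lambda>_. 1) (snd z))) = integral\<^sup>L chi (Lseg L 0 n (\<lambda>y. theta n y * 1))"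
      by (rule Nbar) auto
    also have "\<dots> = integral\<^sup>L chi (Lseg L 0 n (\<lambda>_. 1))"
      unfolding Lseg_def
    proof (rule Bochner_Integration.integral_cong[OF refl])
      fix x assume "x \<in> space chi"
      then have x: "x \<in> space (M 0)" by (simp add: chi_space)
      show "Lprod L 0 (n - 0) (\<lambda>y. theta n y * 1) x = Lprod L 0 (n - 0) (\<lambda>_. 1) x"
        by (rule Lprod_cong[OF _ x]) (simp add: th)
    qed
    finally show ?thesis by simp
  qed
  have num: "integral\<^sup>L CB (\<lambda>x. G 0 x * (Lseg LB 0 n (\<lambda>z. g (snd z)) x)\<^sup>2)
      = integral\<^sup>L chi (\<lambda>x. wm1 x * (Lseg L 0 n g x)\<^sup>2)"
  proof -
    have [measurable]: "theta 0 \<in> borel_measurable (M 0)" "wm1 \<in> borel_measurable (M 0)" "Q \<in> borel_measurable (M 0)"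
      using theta_meas wm1_meas Qm by auto
    have "integral\<^sup>L CB (\<lambda>x. G 0 x * (Lseg LB 0 n (\<lambda>z. g (snd z)) x)\<^sup>2)
        = integral\<^sup>L CB (\<lambda>z. (\<lambda>u. theta 0 u * wm1 u * (Q u)\<^sup>2) (snd z))"
    proof (rule Bochner_Integration.integral_cong[OF refl])
      fix z assume "z \<in> space CB"
      then have z: "snd z \<in> space (M 0)" by (auto simp: CB_space space_pair_measure)
      show "G 0 z * (Lseg LB 0 n (\<lambda>z. g (snd z)) z)\<^sup>2 = theta 0 (snd z) * wm1 (snd z) * (Q (snd z))\<^sup>2"
        using LBprod_Qp[OF g' z] unfolding Lseg_def Q_def G0 by simp
    qed
    also have "\<dots> = integral\<^sup>L nu (\<lambda>x. theta 0 x * wm1 x * (theta 0 x * wm1 x * (Q x)\<^sup>2))"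
      by (rule CB_integral) measurable
    also have "\<dots> = integral\<^sup>L nu (\<lambda>x. wm1 x * (wm1 x * (theta 0 x * Q x)\<^sup>2))"
      by (rule Bochner_Integration.integral_cong[OF refl]) (simp add: power2_eq_square)
    also have "\<dots> = integral\<^sup>L chi (\<lambda>x. wm1 x * (theta 0 x * Q x)\<^sup>2)"
    proof -
      have "(\<lambda>x. wm1 x * (theta 0 x * Q x)\<^sup>2) \<in> borel_measurable (M 0)" by measurable
      from chi_integral[OF this] show ?thesis by (rule sym)
    qed
    also have "\<dots> = integral\<^sup>L chi (\<lambda>x. wm1 x * (Lseg L 0 n g x)\<^sup>2)"
      by (rule Bochner_Integration.integral_cong[OF refl]) (simp add: chi_space LQ)
    finally show ?thesis .
  qed
  show ?thesis unfolding num den ..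
qed

end

theorem mainTheorem9:
  fixes M :: "nat \<Rightarrow> 'a measure"
    and L P :: "nat \<Rightarrow> 'a \<Rightarrow> 'a measure"
    and chi nu :: "'a measure"
    and wm1 :: "'a \<Rightarrow> real"
    and theta :: "nat \<Rightarrow> 'a \<Rightarrow> real"
    and w :: "nat \<Rightarrow> 'a \<Rightarrow> 'a \<Rightarrow> real"
    and n :: nat
    and h :: "'a \<Rightarrow> real"
  assumes L_sets: "\<And>k x. x \<in> space (M k) \<Longrightarrow> sets (L k x) = sets (M (Suc k))"
    and L_meas: "\<And>k A. A \<in> sets (M (Suc k)) \<Longrightarrow> (\<lambda>x. emeasure (L k x) A) \<in> borel_measurable (M k)"
    and L_bdd: "\<And>k. \<exists>B. \<forall>x\<in>space (M k). emeasure (L k x) (space (M (Suc k))) \<le> ennreal B"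
    and nu_prob: "prob_space nu"
    and nu_sets: "sets nu = sets (M 0)"
    and wm1_meas: "wm1 \<in> borel_measurable (M 0)"
    and wm1_nonneg: "\<And>x. x \<in> space (M 0) \<Longrightarrow> 0 \<le> wm1 x"
    and wm1_bdd: "\<exists>B. \<forall>x\<in>space (M 0). wm1 x \<le> B"
    and chi_dens: "chi = density nu (\<lambda>x. ennreal (wm1 x))"
    and norm_pos: "\<And>k. integral\<^sup>L chi (Lseg L 0 k (\<lambda>_. 1)) > 0"
    and theta_meas: "\<And>k. theta k \<in> borel_measurable (M k)"
    and theta_pos: "\<And>k x. x \<in> space (M k) \<Longrightarrow> 0 < theta k x"
    and theta_bdd: "\<And>k. \<exists>B. \<forall>x\<in>space (M k). theta k x \<le> B"
    and P_kernel: "\<And>k. P k \<in> M k \<rightarrow>\<^sub>M prob_algebra (M (Suc k))"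
    and w_meas: "\<And>k. (\<lambda>(x, y). w k x y) \<in> borel_measurable (M k \<Otimes>\<^sub>M M (Suc k))"
    and w_nonneg: "\<And>k x y. x \<in> space (M k) \<Longrightarrow> y \<in> space (M (Suc k)) \<Longrightarrow> 0 \<le> w k x y"
    and w_bdd: "\<And>k. \<exists>B. \<forall>x\<in>space (M k). \<forall>y\<in>space (M (Suc k)). w k x y / theta k x \<le> B"
    and L_wP: "\<And>k x g. x \<in> space (M k) \<Longrightarrow> g \<in> borel_measurable (M (Suc k)) \<Longrightarrow>
                 (\<exists>B. \<forall>y\<in>space (M (Suc k)). \<bar>g y\<bar> \<le> B) \<Longrightarrow>
                 integral\<^sup>L (L k x) g = integral\<^sup>L (P k x) (\<lambda>y. g y * w k x y)"
    and theta_n: "\<And>x. x \<in> space (M n) \<Longrightarrow> theta n x = 1"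
    and h_meas: "h \<in> borel_measurable (M n)"
    and h_bdd: "\<exists>B. \<forall>x\<in>space (M n). \<bar>h x\<bar> \<le> B"
  shows "fk_eta (chibar M nu (gbar wm1 theta w)) (Lbar M P (gbar wm1 theta w)) n (\<lambda>z. h (snd z))
           = fk_eta chi L n h
       \<and> (\<forall>l\<le>n.
            asym_var (chibar M nu (gbar wm1 theta w)) (Lbar M P (gbar wm1 theta w))
                     (gbar wm1 theta w 0) (\<lambda>_ _. 1) (\<lambda>k _ y. gbar wm1 theta w (Suc k) y)
                     l n (\<lambda>z. h (snd z))
            = asym_var chi L wm1 theta w l n h)
       \<and> (\<forall>m f. 1 \<le> m \<longrightarrow> f \<in> borel_measurable (M m) \<longrightarrow>
            (\<exists>B. \<forall>x\<in>space (M m). \<bar>f x\<bar> \<le> B) \<longrightarrow>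
            fk_eta (chibar M nu (gbar wm1 theta w)) (Lbar M P (gbar wm1 theta w)) m (\<lambda>z. f (snd z))
              = fk_eta chi L m (\<lambda>x. theta m x * f x) / fk_eta chi L m (theta m))"
proof -
  interpret fkset M L P chi nu wm1 theta w
    using L_sets nu_prob nu_sets wm1_meas wm1_nonneg chi_dens norm_pos theta_meas theta_pos theta_bdd
      P_kernel w_meas w_nonneg w_bdd L_wP by (intro fkset.intro) blast+
  have eta1: "fk_eta chi L n (\<lambda>_. 1) = 1"
    using norm_pos[of n] by (simp add: fk_eta_def)
  have first: "fk_eta CB LB n (\<lambda>z. h (snd z)) = fk_eta chi L n h"
  proof -
    have "fk_eta CB LB n (\<lambda>z. h (snd z)) = fk_eta chi L n (\<lambda>x. theta n x * h x) / fk_eta chi L n (theta n)"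
      by (rule eta_bar[OF h_meas h_bdd])
    also have "fk_eta chi L n (\<lambda>x. theta n x * h x) = fk_eta chi L n h"
      by (rule fk_cong) (simp add: theta_n)
    also have "fk_eta chi L n (theta n) = fk_eta chi L n (\<lambda>_. 1)"
      by (rule fk_cong) (simp add: theta_n)
    finally show ?thesis using eta1 by simp
  qed
  define c where "c = fk_eta chi L n h"
  define hc where "hc = (\<lambda>x. h x - c)"
  have hcm: "hc \<in> borel_measurable (M n)" unfolding hc_def using h_meas by measurable
  have hcb: "\<exists>B. \<forall>x\<in>space (M n). \<bar>hc x\<bar> \<le> B"
  proof -
    obtain B where B: "\<forall>x\<in>space (M n). \<bar>h x\<bar> \<le> B" using h_bdd by blast
    show ?thesis by (rule exI[of _ "B + \<bar>c\<bar>"]) (use B in \<open>auto simp: hc_def intro: order.trans[OF abs_triangle_ineq4]\<close>)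
  qed
  have second: "asym_var CB LB (G 0) (\<lambda>_ _. 1) (\<lambda>k _ y. G (Suc k) y) l n (\<lambda>z. h (snd z))
            = asym_var chi L wm1 theta w l n h" for l
  proof -
    have hb: "(\<lambda>x. h (snd x) - fk_eta CB LB n (\<lambda>z. h (snd z))) = (\<lambda>z. hc (snd z))"
      unfolding first hc_def c_def ..
    have hb2: "(\<lambda>x. h x - fk_eta chi L n h) = hc"
      unfolding hc_def c_def ..
    show ?thesis
      unfolding asym_var_def Let_def hb hb2
    proof (rule arg_cong2[where f="(+)"])
      show "(if l = 0 then integral\<^sup>L CB (\<lambda>x. G 0 x * (Lseg LB 0 n (\<lambda>z. hc (snd z)) x)\<^sup>2) / (integral\<^sup>L CB (Lseg LB 0 n (\<lambda>_. 1)))\<^sup>2 else 0)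
          = (if l = 0 then integral\<^sup>L chi (\<lambda>x. wm1 x * (Lseg L 0 n hc x)\<^sup>2) / (integral\<^sup>L chi (Lseg L 0 n (\<lambda>_. 1)))\<^sup>2 else 0)"
        using term0[OF theta_n hcm hcb] by (simp only:)
    next
      show "(\<Sum>m\<in>{l - 1..<n}. fk_eta CB LB m (\<lambda>_. 1) *
         fk_eta CB LB m (\<lambda>x. inverse 1 * integral\<^sup>L (LB m x) (\<lambda>y. G (Suc m) y * (Lseg LB (Suc m) n (\<lambda>z. hc (snd z)) y)\<^sup>2))
         / (fk_eta CB LB m (Lseg LB m n (\<lambda>_. 1)))\<^sup>2)
        = (\<Sum>m\<in>{l - 1..<n}. fk_eta chi L m (theta m) *
         fk_eta chi L m (\<lambda>x. inverse (theta m x) * integral\<^sup>L (L m x) (\<lambda>y. w m x y * (Lseg L (Suc m) n hc y)\<^sup>2))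
         / (fk_eta chi L m (Lseg L m n (\<lambda>_. 1)))\<^sup>2)"
        by (rule sum.cong[OF refl], rule sum_term[OF theta_n _ hcm hcb]) simp_all
    qed
  qed
  show ?thesis
  proof (intro conjI allI impI)
    show "fk_eta CB LB n (\<lambda>z. h (snd z)) = fk_eta chi L n h" by (rule first)
  next
    fix l show "asym_var CB LB (G 0) (\<lambda>_ _. 1) (\<lambda>k _ y. G (Suc k) y) l n (\<lambda>z. h (snd z))
            = asym_var chi L wm1 theta w l n h" by (rule second)
  next
    fix m :: nat and f :: "'a \<Rightarrow> real"
    assume "f \<in> borel_measurable (M m)" "\<exists>B. \<forall>x\<in>space (M m). \<bar>f x\<bar> \<le> B"
    then show "fk_eta CB LB m (\<lambda>z. f (snd z)) = fk_eta chi L m (\<lambda>x. theta m x * f x) / fk_eta chi L m (theta m)"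
      by (rule eta_bar)
  qed
qed


end
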